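(* Let $G$ be a subgroup of $O_d(\mathbb R)$, let $\Omega$ be a finite set and let \[\mathcal M=\{\boldsymbol\xi=(\xi_\omega)_{\omega\in\Omega}\in(\mathbb R^d)^\Omega:\ \text{the }\xi_\omega\text{ are pairwise distinct and }\boldsymbol\xi\text{ is }G\text{-invariant}\}.\] Then $\mathcal M$ is a submanifold of $(\mathbb R^d)^\Omega$.
   Context: A family $\boldsymbol\xi=(\xi_\omega)_{\omega\in\Omega}\in(\mathbb R^d)^\Omega$ is $G$-invariant if for every $R\in G$ there is a map $\chi(R):\Omega\to\Omega$ with $R\xi_\omega=\xi_{\chi(R)\omega}$ for all $\omega\in\Omega$. *)

theory Defs
  imports "HOL-Analysis.Analysis"
begin

text \<open>C-infinity smoothness on an open set: all iterated (Frechet/directional) derivatives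
  exist. D vs x is the iterated derivative of f at x in the directions listed in vs.\<close>
definition smooth_on :: "'a::euclidean_space set \<Rightarrow> ('a \<Rightarrow> 'b::euclidean_space) \<Rightarrow> bool" where
  "smooth_on U f \<longleftrightarrow>
     (\<exists>D :: 'a list \<Rightarrow> 'a \<Rightarrow> 'b.
        (\<forall>x\<in>U. D [] x = f x) \<and>
        (\<forall>vs. \<forall>x\<in>U. (D vs has_derivative (\<lambda>h. D (h # vs) x)) (at x)) \<and>
        (\<forall>vs. continuous_on U (D vs)))"

definition diffeomorphism_between ::
  "'a::euclidean_space set \<Rightarrow> 'a set \<Rightarrow> ('a \<Rightarrow> 'a) \<Rightarrow> ('a \<Rightarrow> 'a) \<Rightarrow> bool" where
  "diffeomorphism_between U V \<phi> \<psi> \<longleftrightarrow>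
     open U \<and> open V \<and> smooth_on U \<phi> \<and> smooth_on V \<psi> \<and>
     \<phi> ` U = V \<and> \<psi> ` V = U \<and> (\<forall>x\<in>U. \<psi> (\<phi> x) = x) \<and> (\<forall>y\<in>V. \<phi> (\<psi> y) = y)"

text \<open>Embedded smooth submanifold of a Euclidean space (slice-chart definition; the
  dimension may vary from point to point, i.e. between connected components).\<close>
definition submanifold :: "'a::euclidean_space set \<Rightarrow> bool" where
  "submanifold M \<longleftrightarrow>
     (\<forall>p\<in>M. \<exists>U V \<phi> \<psi> L. p \<in> U \<and> diffeomorphism_between U V \<phi> \<psi> \<and>
        subspace L \<and> \<phi> ` (M \<inter> U) = V \<inter> L)"

definition orthogonal_subgroup :: "(real^'d^'d) set \<Rightarrow> bool" where
  "orthogonal_subgroup G \<longleftrightarrow>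
     (\<forall>R\<in>G. orthogonal_matrix R) \<and> mat 1 \<in> G \<and>
     (\<forall>R\<in>G. \<forall>S\<in>G. R ** S \<in> G) \<and> (\<forall>R\<in>G. matrix_inv R \<in> G)"

definition G_invariant :: "(real^'d^'d) set \<Rightarrow> real^'d^'w \<Rightarrow> bool" where
  "G_invariant G \<xi> \<longleftrightarrow>
     (\<forall>R\<in>G. \<exists>chi :: 'w \<Rightarrow> 'w. \<forall>\<omega>. R *v (\<xi> $ \<omega>) = \<xi> $ (chi \<omega>))"

end

theory Submission
  imports Defs
begin

lemma orth_norm:
  fixes R :: "real^'d^'d"
  assumes "orthogonal_matrix R"
  shows "norm (R *v x) = norm x"
proof -
  have "orthogonal_transformation (\<lambda>x. R *v x)"
    using assms by (simp add: orthogonal_transformation_matrix matrix_of_matrix_vector_mul)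
  thus ?thesis using orthogonal_transformation_norm by blast
qed

lemma smooth_id: "smooth_on U (\<lambda>x::'a::euclidean_space. x)"
proof -
  define D :: "'a list \<Rightarrow> 'a \<Rightarrow> 'a" where
    "D = (\<lambda>vs x. case vs of [] \<Rightarrow> x | [v] \<Rightarrow> v | _ \<Rightarrow> 0)"
  have "(D vs has_derivative (\<lambda>h. D (h # vs) x)) (at x)" for vs x
  proof (cases vs)
    case Nil thus ?thesis by (simp add: D_def has_derivative_ident)
  next
    case (Cons v ws) thus ?thesis
      by (cases ws) (simp_all add: D_def)
  qed
  moreover have "continuous_on U (D vs)" for vs
  proof (cases vs)
    case Nil thus ?thesis by (simp add: D_def continuous_on_id)
  next
    case (Cons v ws) thus ?thesis
      by (cases ws) (simp_all add: D_def)
  qed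
  ultimately show ?thesis unfolding smooth_on_def
    by (intro exI[of _ D]) (simp add: D_def)
qed

theorem lemma2p2:
  fixes G :: "(real^'d^'d) set"
  assumes "orthogonal_subgroup G"
  shows "submanifold {\<xi> :: real^'d^'w. inj (\<lambda>\<omega>. \<xi> $ \<omega>) \<and> G_invariant G \<xi>}"
  unfolding submanifold_def
proof
  fix p assume "p \<in> {\<xi> :: real^'d^'w. inj (\<lambda>\<omega>. \<xi> $ \<omega>) \<and> G_invariant G \<xi>}"
  then have pinj: "inj (\<lambda>\<omega>. p $ \<omega>)" and pinv: "G_invariant G p" by auto
  have orth: "\<And>R. R \<in> G \<Longrightarrow> orthogonal_matrix R" using assms by (simp add: orthogonal_subgroup_def)
  define chi where "chi = (\<lambda>R. SOME c :: 'w \<Rightarrow> 'w. \<forall>\<omega>. R *v (p $ \<omega>) = p $ (c \<omega>))"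
  have chi: "R *v (p $ \<omega>) = p $ (chi R \<omega>)" if "R \<in> G" for R \<omega>
  proof -
    from pinv that obtain c :: "'w \<Rightarrow> 'w" where "\<forall>\<omega>. R *v (p $ \<omega>) = p $ (c \<omega>)"
      unfolding G_invariant_def by blast
    hence "\<forall>\<omega>. R *v (p $ \<omega>) = p $ (chi R \<omega>)" unfolding chi_def by (rule someI[where P="\<lambda>c. \<forall>\<omega>. R *v (p $ \<omega>) = p $ (c \<omega>)"])
    thus ?thesis by blast
  qed
  define S where "S = {dist (p $ a) (p $ b) | a b. a \<noteq> b}"
  have "S = (\<lambda>(a,b). dist (p $ a) (p $ b)) ` {(a,b). a \<noteq> b}" unfolding S_def by auto
  hence finS: "finite S" by simp
  define \<delta> where "\<delta> = Min (insert 1 S)"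
  have Spos: "\<forall>s\<in>S. s > 0" unfolding S_def using pinj by (auto simp: inj_def)
  have dpos: "\<delta> > 0" unfolding \<delta>_def using finS Spos by simp
  have dle: "\<delta> \<le> dist (p $ a) (p $ b)" if "a \<noteq> b" for a b
    unfolding \<delta>_def using finS that by (intro Min_le) (auto simp: S_def)
  define U where "U = ball p (\<delta>/2)"
  define L where "L = {\<xi> :: real^'d^'w. \<forall>R\<in>G. \<forall>\<omega>. R *v (\<xi> $ \<omega>) = \<xi> $ (chi R \<omega>)}"
  have close: "dist (\<xi> $ \<omega>) (p $ \<omega>) < \<delta>/2" if "\<xi> \<in> U" for \<xi> \<omega>
  proof -
    have "dist (\<xi> $ \<omega>) (p $ \<omega>) = norm ((\<xi> - p) $ \<omega>)" by (simp add: dist_norm)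
    also have "\<dots> \<le> norm (\<xi> - p)" by (rule Finite_Cartesian_Product.norm_nth_le)
    also have "\<dots> < \<delta>/2" using that by (simp add: U_def dist_norm norm_minus_commute)
    finally show ?thesis .
  qed
  have eqidx: "a = b" if "dist (p $ a) (p $ b) < \<delta>" for a b
    using dle[of a b] that by (cases "a = b") auto
  have subL: "subspace L"
    unfolding subspace_def L_def
    by (simp add: matrix_vector_right_distrib matrix_vector_mult_scaleR)
  have "{\<xi> :: real^'d^'w. inj (\<lambda>\<omega>. \<xi> $ \<omega>) \<and> G_invariant G \<xi>} \<inter> U = U \<inter> L"
  proof (intro equalityI subsetI)
    fix \<xi> assume a: "\<xi> \<in> {\<xi> :: real^'d^'w. inj (\<lambda>\<omega>. \<xi> $ \<omega>) \<and> G_invariant G \<xi>} \<inter> U"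
    hence xU: "\<xi> \<in> U" and xinv: "G_invariant G \<xi>" by auto
    have "R *v (\<xi> $ \<omega>) = \<xi> $ (chi R \<omega>)" if RG: "R \<in> G" for R \<omega>
    proof -
      from xinv RG obtain c :: "'w \<Rightarrow> 'w" where c: "\<forall>\<omega>. R *v (\<xi> $ \<omega>) = \<xi> $ (c \<omega>)"
        unfolding G_invariant_def by blast
      have "dist (R *v (\<xi> $ \<omega>)) (R *v (p $ \<omega>)) = dist (\<xi> $ \<omega>) (p $ \<omega>)"
        using orth_norm[OF orth[OF RG]] by (simp add: dist_norm matrix_vector_mult_diff_distrib[symmetric])
      hence d1: "dist (\<xi> $ c \<omega>) (p $ chi R \<omega>) < \<delta>/2"
        using close[OF xU, of \<omega>] c chi[OF RG, of \<omega>] by simp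
      have d2: "dist (\<xi> $ c \<omega>) (p $ c \<omega>) < \<delta>/2" using close[OF xU] .
      have "dist (p $ c \<omega>) (p $ chi R \<omega>) < \<delta>"
        using dist_triangle[of "p $ c \<omega>" "p $ chi R \<omega>" "\<xi> $ c \<omega>"] d1 d2
        by (simp add: dist_commute)
      hence "c \<omega> = chi R \<omega>" by (rule eqidx)
      thus ?thesis using c by simp
    qed
    thus "\<xi> \<in> U \<inter> L" using xU by (simp add: L_def)
  next
    fix \<xi> assume a: "\<xi> \<in> U \<inter> L"
    hence xU: "\<xi> \<in> U" and xL: "\<xi> \<in> L" by auto
    have "G_invariant G \<xi>" using xL unfolding G_invariant_def L_def by blast
    moreover have "inj (\<lambda>\<omega>. \<xi> $ \<omega>)"
    proof (rule injI)
      fix a b assume ab: "\<xi> $ a = \<xi> $ b"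
      have "dist (p $ a) (p $ b) < \<delta>"
        using dist_triangle[of "p $ a" "p $ b" "\<xi> $ a"] close[OF xU, of a] close[OF xU, of b] ab
        by (simp add: dist_commute)
      thus "a = b" by (rule eqidx)
    qed
    ultimately show "\<xi> \<in> {\<xi> :: real^'d^'w. inj (\<lambda>\<omega>. \<xi> $ \<omega>) \<and> G_invariant G \<xi>} \<inter> U"
      using xU by simp
  qed
  moreover have "p \<in> U" using dpos by (simp add: U_def)
  moreover have "diffeomorphism_between U U (\<lambda>x. x) (\<lambda>x. x)"
    unfolding diffeomorphism_between_def by (simp add: U_def smooth_id)
  ultimately show "\<exists>U V \<phi> \<psi> L. p \<in> U \<and> diffeomorphism_between U V \<phi> \<psi> \<and> subspace L \<and>
      \<phi> ` ({\<xi> :: real^'d^'w. inj (\<lambda>\<omega>. \<xi> $ \<omega>) \<and> G_invariant G \<xi>} \<inter> U) = V \<inter> L"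
    using subL by (intro exI[of _ U] exI[of _ U] exI[of _ "\<lambda>x. x"] exI[of _ "\<lambda>x. x"] exI[of _ L]) simp
qed

end
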